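(* Let $a<b$ be real numbers and $\{\mathcal N_x\}_{x\in[a,b]}$ a family of quantum channels. Suppose $x\mapsto\mathcal Q_\leftrightarrow(\mathcal N_x)$ is continuous and strictly decreasing on $[a,b]$, and suppose there are functions $\mathcal Q_{lb}(\mathcal N_x),\mathcal Q_{ub}(\mathcal N_x)$, continuous and strictly increasing in $x\in[a,b]$, with $\mathcal Q_{lb}(\mathcal N_x)\le\mathcal Q(\mathcal N_x)\le\mathcal Q_{ub}(\mathcal N_x)<\mathcal Q_\leftrightarrow(\mathcal N_x)$ for all $x\in[a,b]$ and $\mathcal Q_{lb}(\mathcal N_a)=\mathcal Q_{ub}(\mathcal N_a)$. Then there is a strictly decreasing sequence $(x_n)_{n\in\mathbb N}$ with $a<x_n<b$ for all $n$ such that for all $n<m$: $$\mathcal Q(\mathcal N_{x_m})<\mathcal Q(\mathcal N_{x_n})\quad\text{and}\quad \mathcal Q_\leftrightarrow(\mathcal N_{x_m})>\mathcal Q_\leftrightarrow(\mathcal N_{x_n}).$$ The analogous statement holds with $\mathcal P,\mathcal P_\leftrightarrow$ in place of $\mathcal Q,\mathcal Q_\leftrightarrow$.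
   Context: $\mathcal Q$ denotes the quantum capacity (with free forward classical communication) and $\mathcal Q_\leftrightarrow$ the quantum capacity assisted by free two-way classical communication; $\mathcal P,\mathcal P_\leftrightarrow$ are the corresponding private classical capacities. *)

theory Defs
  imports Complex_Main
begin

end

theory Submission
  imports Defs "HOL-Analysis.Analysis"
begin

theorem mainTheorem9:
  fixes a b :: real
    and N :: "real \<Rightarrow> 'c"
    and Cap CapTW Cap_lb Cap_ub :: "'c \<Rightarrow> real"
  assumes "a < b"
    and "continuous_on {a..b} (\<lambda>x. CapTW (N x))"
    and "monotone_on {a..b} (<) (>) (\<lambda>x. CapTW (N x))"
    and "continuous_on {a..b} (\<lambda>x. Cap_lb (N x))"
    and "monotone_on {a..b} (<) (<) (\<lambda>x. Cap_lb (N x))"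
    and "continuous_on {a..b} (\<lambda>x. Cap_ub (N x))"
    and "monotone_on {a..b} (<) (<) (\<lambda>x. Cap_ub (N x))"
    and "\<forall>x\<in>{a..b}. Cap_lb (N x) \<le> Cap (N x) \<and> Cap (N x) \<le> Cap_ub (N x)
                    \<and> Cap_ub (N x) < CapTW (N x)"
    and "Cap_lb (N a) = Cap_ub (N a)"
  shows "\<exists>xs :: nat \<Rightarrow> real. monotone (<) (>) xs \<and> (\<forall>n. a < xs n \<and> xs n < b) \<and>
           (\<forall>n m. n < m \<longrightarrow> Cap (N (xs m)) < Cap (N (xs n)) \<and> CapTW (N (xs m)) > CapTW (N (xs n)))"
proof -
  define L where "L = (\<lambda>x. Cap_lb (N x))"
  define U where "U = (\<lambda>x. Cap_ub (N x))"
  define Q where "Q = (\<lambda>x. Cap (N x))"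
  define T where "T = (\<lambda>x. CapTW (N x))"
  have Lm: "\<And>x y. x \<in> {a..b} \<Longrightarrow> y \<in> {a..b} \<Longrightarrow> x < y \<Longrightarrow> L x < L y"
    using assms(5) unfolding monotone_on_def L_def by blast
  have Tm: "\<And>x y. x \<in> {a..b} \<Longrightarrow> y \<in> {a..b} \<Longrightarrow> x < y \<Longrightarrow> T y < T x"
    using assms(3) unfolding monotone_on_def T_def by blast
  have Ucont: "\<forall>e>0. \<exists>d>0. \<forall>x'\<in>{a..b}. dist x' a < d \<longrightarrow> dist (U x') (U a) < e"
    using assms(6) assms(1) unfolding continuous_on_iff U_def by auto
  have bnd: "\<And>x. x \<in> {a..b} \<Longrightarrow> L x \<le> Q x \<and> Q x \<le> U x"
    using assms(8) unfolding L_def U_def Q_def by blast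
  have step: "\<exists>y. a < y \<and> y < x \<and> U y < L x" if x: "a < x" "x < b" for x
  proof -
    have "L a < L x" using Lm[of a x] x by auto
    hence e: "L x - U a > 0" using assms(9) unfolding L_def U_def by simp
    then obtain d where d: "d > 0" "\<forall>x'\<in>{a..b}. dist x' a < d \<longrightarrow> dist (U x') (U a) < L x - U a"
      using Ucont by blast
    define y where "y = a + min d (x - a) / 2"
    have y: "a < y" "y < x" "y \<in> {a..b}" "dist y a < d" using d x unfolding y_def dist_real_def
      by (auto simp: min_def field_simps)
    hence "dist (U y) (U a) < L x - U a" using d by blast
    hence "U y < L x" unfolding dist_real_def by auto
    thus ?thesis using y by blast
  qed
  define g where "g = (\<lambda>x. SOME y. a < y \<and> y < x \<and> U y < L x)"
  define xs where "xs = (\<lambda>n. (g ^^ n) ((a+b)/2))"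
  have inv: "a < xs n \<and> xs n < b" for n
  proof (induction n)
    case 0 then show ?case using assms(1) by (simp add: xs_def)
  next
    case (Suc n)
    have "a < g (xs n) \<and> g (xs n) < xs n \<and> U (g (xs n)) < L (xs n)"
      unfolding g_def by (rule someI_ex, rule step) (use Suc in auto)
    then show ?case using Suc by (simp add: xs_def)
  qed
  have st: "xs (Suc n) < xs n \<and> U (xs (Suc n)) < L (xs n)" for n
  proof -
    have "a < g (xs n) \<and> g (xs n) < xs n \<and> U (g (xs n)) < L (xs n)"
      unfolding g_def by (rule someI_ex, rule step) (use inv in auto)
    then show ?thesis by (simp add: xs_def)
  qed
  have in_ab: "xs n \<in> {a..b}" for n using inv[of n] by auto
  have q: "Q (xs (Suc n)) < Q (xs n)" for n
    using st[of n] bnd[OF in_ab[of n]] bnd[OF in_ab[of "Suc n"]] by linarith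
  have t: "T (xs n) < T (xs (Suc n))" for n
    using Tm[OF in_ab[of "Suc n"] in_ab[of n]] st[of n] by auto
  have dec: "n < m \<Longrightarrow> xs m < xs n" for n m
    using lift_Suc_mono_less[of "\<lambda>n. - xs n" n m] st by auto
  have qd: "n < m \<Longrightarrow> Q (xs m) < Q (xs n)" for n m
    using lift_Suc_mono_less[of "\<lambda>n. - Q (xs n)" n m] q by auto
  have td: "n < m \<Longrightarrow> T (xs n) < T (xs m)" for n m
    using lift_Suc_mono_less[of "\<lambda>n. T (xs n)" n m] t by auto
  show ?thesis
    apply (rule exI[of _ xs])
    using dec qd td inv unfolding monotone_on_def Q_def T_def by auto
qed

end
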